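(* Let $2 \le m \le n$ and $1 \le h \le k \le m$. Let $P$ be a nonzero orthogonal projection on $\mathcal{H}_n\otimes\mathcal{H}_m$. Then \[ \|P\|_{S(k)} \ge \Big(1 - \frac{k-h}{m-1}\Big)\|P\|_{S(h)} + \frac{k-h}{m-1}. \]
   Context: $\mathcal{H}_d = \mathbb{C}^d$ and $m\le n$. $SR$ denotes Schmidt rank, i.e. the number of nonzero singular values of the coefficient matrix of a vector in $\mathcal{H}_n\otimes\mathcal{H}_m$. For $1\le k\le m$, \[ \|X\|_{S(k)} := \sup\{|\langle w|X|v\rangle| : |v\rangle,|w\rangle \text{ unit vectors}, SR(|v\rangle),SR(|w\rangle)\le k\}. \] *)

theory Defs
  imports "Jordan_Normal_Form.DL_Rank" "Jordan_Normal_Form.Conjugate"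
begin

text \<open>H_n (x) H_m is identified with C^(n*m) via the standard Kronecker basis:
  the basis vector e_i (x) f_j (i<n, j<m) has index i*m + j.\<close>

definition coeff_mat :: "nat \<Rightarrow> nat \<Rightarrow> complex vec \<Rightarrow> complex mat" where
  "coeff_mat n m v = mat n m (\<lambda>(i,j). v $ (i*m + j))"

text \<open>Schmidt rank = number of nonzero singular values = rank of the coefficient matrix.\<close>
definition schmidt_rank :: "nat \<Rightarrow> nat \<Rightarrow> complex vec \<Rightarrow> nat" where
  "schmidt_rank n m v = vec_space.rank n (coeff_mat n m v)"

definition unit_vec_c :: "nat \<Rightarrow> complex vec \<Rightarrow> bool" where
  "unit_vec_c d v \<longleftrightarrow> v \<in> carrier_vec d \<and> (\<Sum>i<d. (cmod (v $ i))\<^sup>2) = 1"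

definition braket :: "complex vec \<Rightarrow> complex mat \<Rightarrow> complex vec \<Rightarrow> complex" where
  "braket w X v = (\<Sum>i<dim_vec w. cnj (w $ i) * (X *\<^sub>v v) $ i)"

definition S_norm :: "nat \<Rightarrow> nat \<Rightarrow> nat \<Rightarrow> complex mat \<Rightarrow> real" where
  "S_norm n m k X = Sup {cmod (braket w X v) | v w.
      unit_vec_c (n*m) v \<and> unit_vec_c (n*m) w \<and>
      schmidt_rank n m v \<le> k \<and> schmidt_rank n m w \<le> k}"

definition orth_projection :: "nat \<Rightarrow> complex mat \<Rightarrow> bool" where
  "orth_projection d P \<longleftrightarrow> P \<in> carrier_mat d d \<and> P * P = P \<and>
      (\<forall>i<d. \<forall>j<d. P $$ (i,j) = cnj (P $$ (j,i)))"

end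

theory Submission imports Defs begin

definition ip :: "'i set \<Rightarrow> ('i \<Rightarrow> complex) \<Rightarrow> ('i \<Rightarrow> complex) \<Rightarrow> complex" where
  "ip A a b = (\<Sum>i\<in>A. cnj (a i) * b i)"

definition orthon :: "'i set \<Rightarrow> nat \<Rightarrow> (nat \<Rightarrow> 'i \<Rightarrow> complex) \<Rightarrow> bool" where
  "orthon A s w \<longleftrightarrow> (\<forall>t<s. \<forall>t'<s. ip A (w t) (w t') = (if t = t' then 1 else 0))"

definition resid :: "'i set \<Rightarrow> nat \<Rightarrow> (nat \<Rightarrow> 'i \<Rightarrow> complex) \<Rightarrow> ('i \<Rightarrow> complex) \<Rightarrow> 'i \<Rightarrow> complex" where
  "resid A s w a = (\<lambda>i. a i - (\<Sum>t<s. ip A (w t) a * w t i))"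

lemma ip_cnj: "cnj (ip A a b) = ip A b a"
  unfolding ip_def by (simp add: mult.commute)

lemma ip_self: "ip A a a = complex_of_real (\<Sum>i\<in>A. (cmod (a i))\<^sup>2)"
  unfolding ip_def of_real_sum by (intro sum.cong refl) (metis complex_norm_square mult.commute)

lemma ip_self_Re: "Re (ip A a a) = (\<Sum>i\<in>A. (cmod (a i))\<^sup>2)"
  by (simp add: ip_self)

lemma ip_self_ge0: "Re (ip A a a) \<ge> 0"
  by (simp add: ip_self_Re sum_nonneg)

lemma ip_self_Im: "Im (ip A a a) = 0"
  by (simp add: ip_self)

lemma ip_lin_right: "ip A a (\<lambda>i. \<Sum>t\<in>T. f t * g t i) = (\<Sum>t\<in>T. f t * ip A a (g t))"
  unfolding ip_def by (simp add: sum_distrib_left sum_distrib_right sum.swap[of _ A] mult.assoc mult.left_commute)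

lemma ip_lin_left: "ip A (\<lambda>i. \<Sum>t\<in>T. f t * g t i) b = (\<Sum>t\<in>T. cnj (f t) * ip A (g t) b)"
  unfolding ip_def by (simp add: sum_distrib_left sum_distrib_right sum.swap[of _ A] mult.assoc mult.left_commute cnj_sum)

lemma ip_diff_right: "ip A a (\<lambda>i. b i - c i) = ip A a b - ip A a c"
  unfolding ip_def by (simp add: right_diff_distrib sum_subtractf)

lemma ip_diff_left: "ip A (\<lambda>i. b i - c i) a = ip A b a - ip A c a"
  unfolding ip_def by (simp add: left_diff_distrib sum_subtractf)

lemma ip_scale_right: "ip A a (\<lambda>i. c * b i) = c * ip A a b"
  unfolding ip_def by (simp add: sum_distrib_left mult.left_commute)

lemma ip_scale_left: "ip A (\<lambda>i. c * b i) a = cnj c * ip A b a"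
  unfolding ip_def by (simp add: sum_distrib_left mult.assoc)

lemma sum_delta_if: "t < (s::nat) \<Longrightarrow> (\<Sum>t'<s. f t' * (if t = t' then 1 else 0)) = (f t :: complex)"
proof -
  assume "t < s"
  have "(\<Sum>t'<s. f t' * (if t = t' then 1 else 0)) = (\<Sum>t'<s. if t = t' then f t' else 0)"
    by (intro sum.cong) auto
  also have "\<dots> = f t" using \<open>t < s\<close> by simp
  finally show ?thesis .
qed

lemma resid_orth:
  assumes "orthon A s w" "t < s"
  shows "ip A (w t) (resid A s w a) = 0"
proof -
  have "ip A (w t) (resid A s w a) = ip A (w t) a - (\<Sum>t'<s. ip A (w t') a * ip A (w t) (w t'))"
    unfolding resid_def ip_diff_right ip_lin_right ..
  also have "(\<Sum>t'<s. ip A (w t') a * ip A (w t) (w t')) = (\<Sum>t'<s. ip A (w t') a * (if t = t' then 1 else 0))"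
    using assms unfolding orthon_def by (intro sum.cong) auto
  also have "\<dots> = ip A (w t) a" using assms(2) by (rule sum_delta_if)
  finally show ?thesis by simp
qed

lemma resid_orth': "orthon A s w \<Longrightarrow> t < s \<Longrightarrow> ip A (resid A s w a) (w t) = 0"
  using resid_orth[of A s w t a] ip_cnj[of A "w t" "resid A s w a"] by simp

lemma resid_pyth:
  assumes "orthon A s w"
  shows "ip A (resid A s w a) (resid A s w a) = ip A a a - (\<Sum>t<s. cnj (ip A (w t) a) * ip A (w t) a)"
proof -
  let ?r = "resid A s w a"
  have r: "?r = (\<lambda>i. a i - (\<Sum>t<s. ip A (w t) a * w t i))" by (simp add: resid_def)
  have "ip A ?r ?r = ip A ?r a - ip A ?r (\<lambda>i. \<Sum>t<s. ip A (w t) a * w t i)"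
    by (subst (2) r) (rule ip_diff_right)
  also have "ip A ?r (\<lambda>i. \<Sum>t<s. ip A (w t) a * w t i) = 0"
    unfolding ip_lin_right using resid_orth'[OF assms] by simp
  also have "ip A ?r a = ip A a a - (\<Sum>t<s. cnj (ip A (w t) a) * ip A (w t) a)"
    by (subst r) (simp add: ip_diff_left ip_lin_left)
  finally show ?thesis by simp
qed

lemma resid_pyth_Re:
  assumes "orthon A s w"
  shows "Re (ip A (resid A s w a) (resid A s w a)) = Re (ip A a a) - (\<Sum>t<s. (cmod (ip A (w t) a))\<^sup>2)"
proof -
  have "\<And>z. Re (cnj z * z) = (cmod z)\<^sup>2" by (simp add: cmod_power2 power2_eq_square[symmetric])
  then show ?thesis using resid_pyth[OF assms, of a] by simp
qed

lemma bessel: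
  assumes "orthon A s w"
  shows "(\<Sum>t<s. (cmod (ip A (w t) a))\<^sup>2) \<le> Re (ip A a a)"
  using resid_pyth_Re[OF assms, of a] ip_self_ge0[of A "resid A s w a"] by linarith

lemma ip_zero_iff:
  assumes "finite A"
  shows "Re (ip A a a) = 0 \<longleftrightarrow> (\<forall>i\<in>A. a i = 0)"
  using assms by (simp add: ip_self_Re sum_nonneg_eq_0_iff)

lemma cauchy_schwarz:
  assumes "finite A"
  shows "(cmod (ip A a b))\<^sup>2 \<le> Re (ip A a a) * Re (ip A b b)"
proof (cases "Re (ip A b b) = 0")
  case True
  then have "\<forall>i\<in>A. b i = 0" using ip_zero_iff[OF assms] by blast
  then have "ip A a b = 0" unfolding ip_def by simp
  then show ?thesis using ip_self_ge0[of A a] ip_self_ge0[of A b] by simp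
next
  case False
  define B where "B = Re (ip A b b)"
  have Bpos: "B > 0" using False ip_self_ge0[of A b] unfolding B_def by linarith
  define w where "w = (\<lambda>(t::nat) i. complex_of_real (1 / sqrt B) * b i)"
  have "ip A (w 0) (w 0) = complex_of_real (1/sqrt B) * complex_of_real (1/sqrt B) * ip A b b"
    unfolding w_def ip_scale_left ip_scale_right by simp
  also have "ip A b b = complex_of_real B" unfolding B_def using ip_self_Im[of A b]
    by (simp add: complex_eq_iff)
  finally have "ip A (w 0) (w 0) = 1" using Bpos
    by (simp add: of_real_mult[symmetric] del: of_real_mult)
  then have o: "orthon A 1 w" unfolding orthon_def by simp
  have "(cmod (ip A (w 0) a))\<^sup>2 \<le> Re (ip A a a)" using bessel[OF o, of a] by simp
  moreover have "ip A (w 0) a = complex_of_real (1 / sqrt B) * ip A b a"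
    unfolding w_def ip_scale_left by simp
  moreover have "cmod (ip A b a) = cmod (ip A a b)" using ip_cnj[of A a b] by (metis complex_mod_cnj)
  moreover have "(cmod (ip A b a / complex_of_real (sqrt B)))\<^sup>2 = (cmod (ip A b a))\<^sup>2 / B"
    using Bpos by (simp add: norm_divide power_divide)
  ultimately have "(cmod (ip A a b))\<^sup>2 / B \<le> Re (ip A a a)" using Bpos
    by simp
  then show ?thesis using Bpos unfolding B_def[symmetric] by (simp add: field_simps)
qed


lemma extend_orthon:
  assumes "orthon A s w" "\<forall>t<s. ip A (w t) v = 0" "ip A v v = 1"
  shows "orthon A (Suc s) (w(s := v))"
  unfolding orthon_def
proof (intro allI impI)
  fix t t' assume t: "t < Suc s" and t': "t' < Suc s"
  have v0: "ip A v (w t) = 0" if "t < s" for t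
    using assms(2) that ip_cnj[of A "w t" v] by simp
  show "ip A ((w(s := v)) t) ((w(s := v)) t') = (if t = t' then 1 else 0)"
    using t t' assms v0 unfolding orthon_def
    by (cases "t = s"; cases "t' = s") (auto simp: less_Suc_eq)
qed

definition normz :: "'i set \<Rightarrow> ('i \<Rightarrow> complex) \<Rightarrow> 'i \<Rightarrow> complex" where
  "normz A d = (\<lambda>i. complex_of_real (1 / sqrt (Re (ip A d d))) * d i)"

lemma ip_self_real: "ip A d d = complex_of_real (Re (ip A d d))"
  using ip_self_Im[of A d] by (simp add: complex_eq_iff)

lemma normz_unit:
  assumes "Re (ip A d d) > 0"
  shows "ip A (normz A d) (normz A d) = 1"
proof -
  let ?D = "Re (ip A d d)"
  have "ip A (normz A d) (normz A d) = complex_of_real (1 / sqrt ?D) * complex_of_real (1 / sqrt ?D) * ip A d d"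
    unfolding normz_def ip_scale_left ip_scale_right by simp
  also have "\<dots> = complex_of_real (1 / sqrt ?D) * complex_of_real (1 / sqrt ?D) * complex_of_real ?D"
    by (metis ip_self_real)
  also have "\<dots> = complex_of_real (1 / sqrt ?D * (1 / sqrt ?D) * ?D)"
    by (simp only: of_real_mult)
  also have "1 / sqrt ?D * (1 / sqrt ?D) * ?D = 1" using assms
    by (simp add: field_simps)
  finally show ?thesis by simp
qed

lemma normz_inv:
  assumes "Re (ip A d d) > 0"
  shows "d i = complex_of_real (sqrt (Re (ip A d d))) * normz A d i"
proof -
  let ?D = "Re (ip A d d)"
  have "sqrt ?D * (1 / sqrt ?D) = 1" using assms by simp
  then have "complex_of_real (sqrt ?D) * complex_of_real (1/sqrt ?D) = 1" by (metis of_real_1 of_real_mult)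
  then show ?thesis unfolding normz_def by (metis mult.assoc mult_1)
qed

lemma normz_orth:
  assumes "ip A a d = 0"
  shows "ip A a (normz A d) = 0"
  using assms unfolding normz_def ip_scale_right by simp

lemma gs_exists:
  fixes \<alpha> :: "nat \<Rightarrow> 'i \<Rightarrow> complex"
  assumes "finite A"
  shows "\<exists>s w \<gamma>. s \<le> r \<and> orthon A s w \<and> (\<forall>l<r. \<forall>i\<in>A. \<alpha> l i = (\<Sum>t<s. \<gamma> l t * w t i))"
proof (induction r)
  case 0
  show ?case by (rule exI[of _ 0]) (auto simp: orthon_def)
next
  case (Suc r)
  then obtain s w \<gamma> where s: "s \<le> r" and o: "orthon A s w"
    and rep: "\<forall>l<r. \<forall>i\<in>A. \<alpha> l i = (\<Sum>t<s. \<gamma> l t * w t i)" by blast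
  define a where "a = \<alpha> r"
  define d where "d = resid A s w a"
  have ad: "a i = (\<Sum>t<s. ip A (w t) a * w t i) + d i" for i
    unfolding d_def resid_def by simp
  show ?case
  proof (cases "Re (ip A d d) = 0")
    case True
    then have d0: "\<forall>i\<in>A. d i = 0" using ip_zero_iff[OF assms] by blast
    define \<gamma>' where "\<gamma>' = \<gamma>(r := (\<lambda>t. ip A (w t) a))"
    show ?thesis
    proof (intro exI conjI)
      show "s \<le> Suc r" using s by simp
      show "orthon A s w" by (rule o)
      show "\<forall>l<Suc r. \<forall>i\<in>A. \<alpha> l i = (\<Sum>t<s. \<gamma>' l t * w t i)"
        using rep d0 ad unfolding \<gamma>'_def a_def by (auto simp: less_Suc_eq)
    qed
  next
    case False
    then have Dpos: "Re (ip A d d) > 0" using ip_self_ge0[of A d] by linarith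
    define v where "v = normz A d"
    define D where "D = Re (ip A d d)"
    define \<gamma>' where "\<gamma>' = (\<lambda>l t. if l = r then (if t < s then ip A (w t) a else complex_of_real (sqrt D))
                                 else (if t < s then \<gamma> l t else 0))"
    have orth: "orthon A (Suc s) (w(s := v))"
    proof (rule extend_orthon[OF o])
      show "\<forall>t<s. ip A (w t) v = 0" unfolding v_def d_def
        using resid_orth[OF o] normz_orth by blast
      show "ip A v v = 1" unfolding v_def using normz_unit[OF Dpos] .
    qed
    show ?thesis
    proof (intro exI conjI)
      show "Suc s \<le> Suc r" using s by simp
      show "orthon A (Suc s) (w(s := v))" by (rule orth)
      show "\<forall>l<Suc r. \<forall>i\<in>A. \<alpha> l i = (\<Sum>t<Suc s. \<gamma>' l t * (w(s := v)) t i)"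
      proof (intro allI impI ballI)
        fix l i assume l: "l < Suc r" and i: "i \<in> A"
        have split: "(\<Sum>t<Suc s. \<gamma>' l t * (w(s := v)) t i) = (\<Sum>t<s. \<gamma>' l t * w t i) + \<gamma>' l s * v i"
          by (simp add: sum.lessThan_Suc)
        show "\<alpha> l i = (\<Sum>t<Suc s. \<gamma>' l t * (w(s := v)) t i)"
        proof (cases "l = r")
          case True
          have "d i = complex_of_real (sqrt D) * v i" unfolding v_def D_def by (rule normz_inv[OF Dpos])
          then show ?thesis unfolding split using True ad[of i] unfolding \<gamma>'_def a_def by simp
        next
          case False
          then have "l < r" using l by simp
          then show ?thesis unfolding split using False rep i unfolding \<gamma>'_def by simp
        qed
      qed
    qed
  qed
qed

lemma averaging:
  fixes a B :: "'j \<Rightarrow> real"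
  assumes "finite J" "(\<Sum>j\<in>J. B j) > 0" "\<forall>j\<in>J. B j \<ge> 0" "\<forall>j\<in>J. B j = 0 \<longrightarrow> a j = 0"
  shows "\<exists>j\<in>J. B j > 0 \<and> a j * (\<Sum>j\<in>J. B j) \<ge> (\<Sum>j\<in>J. a j) * B j"
proof (rule ccontr)
  assume na: "\<not> ?thesis"
  let ?SA = "\<Sum>j\<in>J. a j" and ?SB = "\<Sum>j\<in>J. B j"
  have le: "\<forall>j\<in>J. a j * ?SB \<le> ?SA * B j"
  proof
    fix j assume j: "j \<in> J"
    show "a j * ?SB \<le> ?SA * B j"
    proof (cases "B j = 0")
      case True then show ?thesis using assms(4) j by simp
    next
      case False
      have "B j \<ge> 0" using assms(3) j by blast
      then have "B j > 0" using False by linarith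
      then show ?thesis using na j by auto
    qed
  qed
  obtain j where j: "j \<in> J" "B j > 0"
  proof (rule ccontr)
    assume "\<not> thesis"
    then have "\<forall>j\<in>J. B j = 0" using assms(3) that by force
    then show False using assms(2) by simp
  qed
  then have "a j * ?SB < ?SA * B j" using na by auto
  then have "(\<Sum>j\<in>J. a j * ?SB) < (\<Sum>j\<in>J. ?SA * B j)"
    using sum_strict_mono_ex1[OF assms(1) le] j by blast
  moreover have "(\<Sum>j\<in>J. a j * ?SB) = ?SA * ?SB" by (simp add: sum_distrib_right)
  moreover have "(\<Sum>j\<in>J. ?SA * B j) = ?SA * ?SB" by (simp add: sum_distrib_left)
  ultimately show False by simp
qed


definition mass :: "nat \<Rightarrow> 'i set \<Rightarrow> nat \<Rightarrow> (nat \<Rightarrow> 'i \<Rightarrow> complex) \<Rightarrow> (nat \<Rightarrow> 'i \<Rightarrow> complex) \<Rightarrow> real" where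
  "mass n A s w X = (\<Sum>p<n. \<Sum>t<s. (cmod (ip A (w t) (X p)))\<^sup>2)"

definition ev :: "'i \<Rightarrow> 'i \<Rightarrow> complex" where
  "ev j = (\<lambda>i. if i = j then 1 else 0)"

lemma ip_ev_right: "finite A \<Longrightarrow> j \<in> A \<Longrightarrow> ip A a (ev j) = cnj (a j)"
  unfolding ip_def ev_def by (simp add: if_distrib[of "\<lambda>x. _ * x"] cong: if_cong)

lemma ip_ev_left: "finite A \<Longrightarrow> j \<in> A \<Longrightarrow> ip A (ev j) b = b j"
  unfolding ip_def ev_def by (simp add: if_distrib[of "\<lambda>x. cnj x * _"] cong: if_cong)

lemma mass_Suc:
  "mass n A (Suc s) (w(s := v)) X = mass n A s w X + (\<Sum>p<n. (cmod (ip A v (X p)))\<^sup>2)"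
  unfolding mass_def by (simp add: sum.distrib)

lemma mass_le:
  assumes "orthon A s w"
  shows "mass n A s w X \<le> (\<Sum>p<n. Re (ip A (X p) (X p)))"
  unfolding mass_def by (rule sum_mono) (rule bessel[OF assms])

lemma ext_step:
  assumes fin: "finite A" and o: "orthon A s w" and sA: "s < card A"
    and nX: "(\<Sum>p<n. Re (ip A (X p) (X p))) = 1"
  shows "\<exists>v. orthon A (Suc s) (w(s := v)) \<and>
     mass n A (Suc s) (w(s := v)) X \<ge> mass n A s w X + (1 - mass n A s w X) / (card A - s)"
proof -
  define u where "u j = resid A s w (ev j)" for j
  define M where "M = mass n A s w X"
  define a where "a j = (\<Sum>p<n. (cmod (ip A (u j) (X p)))\<^sup>2)" for j
  define B where "B j = Re (ip A (u j) (u j))" for j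
  have ipu: "ip A (u j) (X p) = resid A s w (X p) j" if j: "j \<in> A" for j p
  proof -
    have "ip A (u j) (X p) = ip A (ev j) (X p) - (\<Sum>t<s. cnj (ip A (w t) (ev j)) * ip A (w t) (X p))"
      unfolding u_def resid_def ip_diff_left ip_lin_left ..
    also have "\<dots> = X p j - (\<Sum>t<s. w t j * ip A (w t) (X p))"
      using fin j by (simp add: ip_ev_left ip_ev_right)
    also have "\<dots> = resid A s w (X p) j"
      unfolding resid_def by (simp add: mult.commute)
    finally show ?thesis .
  qed
  have sa: "(\<Sum>j\<in>A. a j) = 1 - M"
  proof -
    have "(\<Sum>j\<in>A. a j) = (\<Sum>p<n. \<Sum>j\<in>A. (cmod (resid A s w (X p) j))\<^sup>2)"
      unfolding a_def using ipu by (simp add: sum.swap[of _ A])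
    also have "\<dots> = (\<Sum>p<n. Re (ip A (X p) (X p)) - (\<Sum>t<s. (cmod (ip A (w t) (X p)))\<^sup>2))"
      using resid_pyth_Re[OF o] by (simp add: ip_self_Re)
    also have "\<dots> = 1 - M" unfolding M_def mass_def using nX by (simp add: sum_subtractf)
    finally show ?thesis .
  qed
  have sb: "(\<Sum>j\<in>A. B j) = real (card A - s)"
  proof -
    have "(\<Sum>j\<in>A. B j) = (\<Sum>j\<in>A. 1 - (\<Sum>t<s. (cmod (w t j))\<^sup>2))"
    proof (rule sum.cong[OF refl])
      fix j assume j: "j \<in> A"
      have "B j = Re (ip A (ev j) (ev j)) - (\<Sum>t<s. (cmod (ip A (w t) (ev j)))\<^sup>2)"
        unfolding B_def u_def by (rule resid_pyth_Re[OF o])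
      moreover have "ip A (ev j) (ev j) = 1" using ip_ev_left[OF fin j] by (simp add: ev_def)
      moreover have "ip A (w t) (ev j) = cnj (w t j)" for t using ip_ev_right[OF fin j] .
      ultimately show "B j = 1 - (\<Sum>t<s. (cmod (w t j))\<^sup>2)" by simp
    qed
    also have "\<dots> = real (card A) - (\<Sum>t<s. \<Sum>j\<in>A. (cmod (w t j))\<^sup>2)"
      by (simp add: sum_subtractf sum.swap[of _ A])
    also have "(\<Sum>t<s. \<Sum>j\<in>A. (cmod (w t j))\<^sup>2) = (\<Sum>t<s. 1)"
    proof (rule sum.cong[OF refl])
      fix t assume "t \<in> {..<s}"
      then have "ip A (w t) (w t) = 1" using o unfolding orthon_def by simp
      then show "(\<Sum>j\<in>A. (cmod (w t j))\<^sup>2) = 1" using ip_self_Re[of A "w t"] by simp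
    qed
    finally show ?thesis using sA by simp
  qed
  have Bnn: "\<forall>j\<in>A. B j \<ge> 0" unfolding B_def using ip_self_ge0 by blast
  have Bz: "\<forall>j\<in>A. B j = 0 \<longrightarrow> a j = 0"
  proof (intro ballI impI)
    fix j assume j: "j \<in> A" and "B j = 0"
    then have "\<forall>i\<in>A. u j i = 0" using ip_zero_iff[OF fin] unfolding B_def by blast
    then have "ip A (u j) (X p) = 0" for p unfolding ip_def by simp
    then show "a j = 0" unfolding a_def by simp
  qed
  have sbpos: "(\<Sum>j\<in>A. B j) > 0" using sb sA by simp
  obtain j where j: "j \<in> A" "B j > 0" and aj: "a j * (\<Sum>j\<in>A. B j) \<ge> (\<Sum>j\<in>A. a j) * B j"
    using averaging[OF fin sbpos Bnn Bz] by blast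
  define v where "v = normz A (u j)"
  have orth: "orthon A (Suc s) (w(s := v))"
  proof (rule extend_orthon[OF o])
    show "\<forall>t<s. ip A (w t) v = 0" unfolding v_def u_def
      using resid_orth[OF o] normz_orth by blast
    show "ip A v v = 1" unfolding v_def using normz_unit j(2) unfolding B_def by blast
  qed
  have gain: "(\<Sum>p<n. (cmod (ip A v (X p)))\<^sup>2) = a j / B j"
  proof -
    have "ip A v (X p) = complex_of_real (1 / sqrt (B j)) * ip A (u j) (X p)" for p
      unfolding v_def normz_def ip_scale_left B_def by simp
    then have "(cmod (ip A v (X p)))\<^sup>2 = (cmod (ip A (u j) (X p)))\<^sup>2 / B j" for p
      using j(2) by (simp add: norm_divide power_divide)
    then show ?thesis unfolding a_def by (simp add: sum_divide_distrib)
  qed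
  have "(1 - M) / real (card A - s) \<le> a j / B j"
    using aj j(2) sbpos unfolding sa sb by (simp add: divide_simps mult.commute)
  then show ?thesis using orth gain mass_Suc[of n A s w v X] unfolding M_def by (intro exI[of _ v]) simp
qed


lemma ip_cong: "(\<And>i. i \<in> A \<Longrightarrow> b i = b' i) \<Longrightarrow> (\<And>i. i \<in> A \<Longrightarrow> a i = a' i) \<Longrightarrow> ip A a b = ip A a' b'"
  unfolding ip_def by simp

lemma ip_orthon_expand:
  assumes o: "orthon A s w"
  shows "ip A (\<lambda>i. \<Sum>t<s. y t * w t i) (\<lambda>i. \<Sum>t<s. y t * w t i) = (\<Sum>t<s. cnj (y t) * y t)"
proof -
  have "ip A (\<lambda>i. \<Sum>t<s. y t * w t i) (\<lambda>i. \<Sum>t<s. y t * w t i)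
      = (\<Sum>t<s. cnj (y t) * (\<Sum>t'<s. y t' * ip A (w t) (w t')))"
    by (simp add: ip_lin_left ip_lin_right)
  also have "\<dots> = (\<Sum>t<s. cnj (y t) * y t)"
  proof (rule sum.cong[OF refl])
    fix t assume t: "t \<in> {..<s}"
    have "(\<Sum>t'<s. y t' * ip A (w t) (w t')) = (\<Sum>t'<s. y t' * (if t = t' then 1 else 0))"
      using o t unfolding orthon_def by (intro sum.cong) auto
    also have "\<dots> = y t" using t by (intro sum_delta_if) simp
    finally show "cnj (y t) * (\<Sum>t'<s. y t' * ip A (w t) (w t')) = cnj (y t) * y t" by simp
  qed
  finally show ?thesis .
qed

lemma sum_pairs: "(\<Sum>p<n. \<Sum>t<s. f t p) = (\<Sum>(t,p)\<in>{..<s} \<times> {..<n}. f t p)"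
  by (simp add: sum.cartesian_product[symmetric] sum.swap[of _ "{..<n}"])

lemma iter_ext:
  assumes fin: "finite A" and o: "orthon A s0 w" and s0: "s0 < card A"
    and nX: "(\<Sum>p<n. Re (ip A (X p) (X p))) = 1"
  shows "s0 + i \<le> card A \<Longrightarrow> \<exists>w'. orthon A (s0 + i) w' \<and>
     mass n A (s0 + i) w' X \<ge> 1 - (1 - mass n A s0 w X) * (real (card A) - real s0 - real i) / (real (card A) - real s0)"
proof (induction i)
  case 0
  show ?case using s0 o by (intro exI[of _ w]) simp
next
  case (Suc i)
  then obtain w' where o': "orthon A (s0 + i) w'"
    and b: "mass n A (s0 + i) w' X \<ge> 1 - (1 - mass n A s0 w X) * (real (card A) - real s0 - real i) / (real (card A) - real s0)"
    by auto
  have lt: "s0 + i < card A" using Suc.prems by simp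
  obtain v where o'': "orthon A (Suc (s0 + i)) (w'(s0 + i := v))"
    and b': "mass n A (Suc (s0 + i)) (w'(s0 + i := v)) X \<ge> mass n A (s0 + i) w' X + (1 - mass n A (s0 + i) w' X) / (card A - (s0 + i))"
    using ext_step[OF fin o' lt nX] by blast
  define K where "K = (1 - mass n A s0 w X) / (real (card A) - real s0)"
  define b0 where "b0 = mass n A (s0 + i) w' X"
  define D where "D = real (card A) - real s0 - real i"
  have Dpos: "D \<ge> 1" unfolding D_def using lt by simp
  have cD: "real (card A - (s0 + i)) = D" unfolding D_def using lt by simp
  have bK: "1 - b0 \<le> K * D" using b unfolding b0_def K_def D_def by (simp add: field_simps)
  have "(1 - b0) * ((D - 1) / D) \<le> K * D * ((D - 1) / D)"
    using bK Dpos by (intro mult_right_mono) auto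
  also have "K * D * ((D - 1) / D) = K * (D - 1)" using Dpos by (simp add: field_simps)
  finally have "1 - (b0 + (1 - b0) / D) \<le> K * (D - 1)" using Dpos by (simp add: field_simps)
  then have "mass n A (Suc (s0 + i)) (w'(s0 + i := v)) X \<ge> 1 - K * (D - 1)"
    using b' unfolding b0_def cD by linarith
  moreover have "1 - K * (D - 1) = 1 - (1 - mass n A s0 w X) * (real (card A) - real s0 - real (Suc i)) / (real (card A) - real s0)"
    unfolding K_def D_def by (simp add: field_simps)
  ultimately have G: "\<exists>w''. orthon A (Suc (s0 + i)) w'' \<and> mass n A (Suc (s0 + i)) w'' X \<ge> 1 - (1 - mass n A s0 w X) * (real (card A) - real s0 - real (Suc i)) / (real (card A) - real s0)"
    using o'' by metis
  show ?case using G by simp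
qed

lemma core:
  fixes X Y :: "nat \<Rightarrow> nat \<Rightarrow> complex" and \<alpha> \<beta> :: "nat \<Rightarrow> nat \<Rightarrow> complex"
  assumes m: "2 \<le> m" and hk: "1 \<le> h" "h \<le> k" "k \<le> m"
    and nX: "(\<Sum>p<n. Re (ip {..<m} (X p) (X p))) = 1"
    and nY: "(\<Sum>p<n. Re (ip {..<m} (Y p) (Y p))) = 1"
    and repY: "\<forall>p<n. \<forall>j<m. Y p j = (\<Sum>l<r. \<beta> l p * \<alpha> l j)" and r: "r \<le> h"
  shows "\<exists>s w. s \<le> k \<and> orthon {..<m} s w \<and>
    mass n {..<m} s w X \<ge> (cmod (\<Sum>p<n. ip {..<m} (X p) (Y p)))\<^sup>2
       + real (k - h) / real (m - 1) * (1 - (cmod (\<Sum>p<n. ip {..<m} (X p) (Y p)))\<^sup>2)"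
proof -
  let ?A = "{..<m} :: nat set"
  define a where "a = (cmod (\<Sum>p<n. ip ?A (X p) (Y p)))\<^sup>2"
  obtain s0 w \<gamma> where s0: "s0 \<le> r" and o: "orthon ?A s0 w"
    and rep: "\<forall>l<r. \<forall>j\<in>?A. \<alpha> l j = (\<Sum>t<s0. \<gamma> l t * w t j)"
    using gs_exists[where A = ?A and \<alpha> = \<alpha> and r = r] by auto
  define y where "y t p = (\<Sum>l<r. \<beta> l p * \<gamma> l t)" for t p
  have Yrep: "Y p j = (\<Sum>t<s0. y t p * w t j)" if "p < n" "j < m" for p j
  proof -
    have "Y p j = (\<Sum>l<r. \<beta> l p * (\<Sum>t<s0. \<gamma> l t * w t j))"
      using repY rep that by simp
    also have "\<dots> = (\<Sum>t<s0. y t p * w t j)"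
      unfolding y_def by (simp add: sum_distrib_left sum_distrib_right sum.swap[of _ "{..<r}"] mult.assoc)
    finally show ?thesis .
  qed
  define c where "c t p = ip ?A (w t) (X p)" for t p
  have ipXY: "ip ?A (X p) (Y p) = (\<Sum>t<s0. cnj (c t p) * y t p)" if "p < n" for p
  proof -
    have "ip ?A (X p) (Y p) = ip ?A (X p) (\<lambda>j. \<Sum>t<s0. y t p * w t j)"
      using Yrep that by (intro ip_cong) auto
    also have "\<dots> = (\<Sum>t<s0. y t p * ip ?A (X p) (w t))" by (rule ip_lin_right)
    also have "\<dots> = (\<Sum>t<s0. cnj (c t p) * y t p)" unfolding c_def
      by (simp add: ip_cnj mult.commute)
    finally show ?thesis .
  qed
  have ipYY: "ip ?A (Y p) (Y p) = (\<Sum>t<s0. cnj (y t p) * y t p)" if "p < n" for p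
  proof -
    have "ip ?A (Y p) (Y p) = ip ?A (\<lambda>j. \<Sum>t<s0. y t p * w t j) (\<lambda>j. \<Sum>t<s0. y t p * w t j)"
      using Yrep that by (intro ip_cong) auto
    also have "\<dots> = (\<Sum>t<s0. cnj (y t p) * y t p)" by (rule ip_orthon_expand[OF o])
    finally show ?thesis .
  qed
  let ?PS = "{..<s0} \<times> {..<n}"
  define C where "C = (\<lambda>(t, p). c t p)"
  define Yv where "Yv = (\<lambda>(t, p). y t p)"
  have I: "(\<Sum>p<n. ip ?A (X p) (Y p)) = ip ?PS C Yv"
  proof -
    have "(\<Sum>p<n. ip ?A (X p) (Y p)) = (\<Sum>p<n. \<Sum>t<s0. cnj (c t p) * y t p)"
      using ipXY by simp
    also have "\<dots> = ip ?PS C Yv" unfolding sum_pairs ip_def C_def Yv_def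
      by (simp add: case_prod_beta)
    finally show ?thesis .
  qed
  have NY: "Re (ip ?PS Yv Yv) = 1"
  proof -
    have "(\<Sum>p<n. ip ?A (Y p) (Y p)) = (\<Sum>p<n. \<Sum>t<s0. cnj (y t p) * y t p)"
      using ipYY by simp
    also have "\<dots> = ip ?PS Yv Yv" unfolding sum_pairs ip_def Yv_def
      by (simp add: case_prod_beta)
    finally show ?thesis using nY by (metis Re_sum)
  qed
  have NC: "Re (ip ?PS C C) = mass n ?A s0 w X"
  proof -
    have "Re (ip ?PS C C) = (\<Sum>(t,p)\<in>?PS. (cmod (c t p))\<^sup>2)"
      unfolding ip_self_Re C_def by (simp add: case_prod_beta)
    also have "\<dots> = mass n ?A s0 w X" unfolding mass_def sum_pairs c_def ..
    finally show ?thesis .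
  qed
  have a_le: "a \<le> mass n ?A s0 w X"
    using cauchy_schwarz[of ?PS C Yv] unfolding a_def I NY NC by simp
  have m_le: "mass n ?A s0 w X \<le> 1" using mass_le[OF o, of n X] nX by simp
  have s0pos: "s0 \<ge> 1"
  proof (rule ccontr)
    assume "\<not> s0 \<ge> 1"
    then have "s0 = 0" by simp
    then have "ip ?A (Y p) (Y p) = 0" if "p < n" for p using ipYY that by simp
    then show False using nY by simp
  qed
  show ?thesis
  proof (cases "k = h")
    case True
    then show ?thesis using a_le o s0 r unfolding a_def[symmetric] by (intro exI[of _ s0] exI[of _ w]) auto
  next
    case False
    then have hk': "h < k" using hk by simp
    have s0m: "s0 < card ?A" using s0 r hk' hk by simp
    obtain w' where o': "orthon ?A (s0 + (k - h)) w'"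
      and b: "mass n ?A (s0 + (k - h)) w' X \<ge> 1 - (1 - mass n ?A s0 w X) * (real (card ?A) - real s0 - real (k - h)) / (real (card ?A) - real s0)"
    proof -
      have pre: "s0 + (k - h) \<le> card ?A" using s0 r hk by simp
      show ?thesis using iter_ext[OF finite_lessThan o s0m nX pre] that by blast
    qed
    define M0 where "M0 = mass n ?A s0 w X"
    define cc where "cc = real (k - h) / (real m - real s0)"
    define cc' where "cc' = real (k - h) / real (m - 1)"
    have mpos: "real m - real s0 > 0" using s0m by simp
    have b2: "mass n ?A (s0 + (k - h)) w' X \<ge> M0 + (1 - M0) * cc"
    proof -
      have "1 - (1 - M0) * (real m - real s0 - real (k - h)) / (real m - real s0) = M0 + (1 - M0) * cc"
        unfolding cc_def using mpos by (simp add: field_simps)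
      then show ?thesis using b unfolding M0_def by simp
    qed
    have cc_le1: "cc \<le> 1" unfolding cc_def using mpos s0 r hk by (simp add: field_simps)
    have m1: "real (m - 1) = real m - 1" using m by simp
    have cc'_le: "cc' \<le> cc" unfolding cc_def cc'_def m1 using s0pos m hk' mpos
      by (intro divide_left_mono) auto
    have "a + (1 - a) * cc' \<le> a + (1 - a) * cc"
      using cc'_le a_le m_le unfolding M0_def by (intro add_left_mono mult_left_mono) auto
    also have "\<dots> = a * (1 - cc) + cc" by (simp add: algebra_simps)
    also have "\<dots> \<le> M0 * (1 - cc) + cc" using a_le cc_le1 unfolding M0_def
      by (intro add_right_mono mult_right_mono) auto
    also have "\<dots> = M0 + (1 - M0) * cc" by (simp add: algebra_simps)
    finally have fin: "a + cc' * (1 - a) \<le> mass n ?A (s0 + (k - h)) w' X" using b2 by (simp add: mult.commute)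
    show ?thesis using o' fin s0 r hk unfolding a_def cc'_def by (intro exI[of _ "s0 + (k - h)"] exI[of _ w']) auto
  qed
qed


lemma rank_rep:
  fixes Y :: "complex mat"
  assumes Y: "Y \<in> carrier_mat n m" and rk: "vec_space.rank n Y \<le> h"
  shows "\<exists>r \<beta> \<alpha>. r \<le> h \<and> (\<forall>p<n. \<forall>j<m. Y $$ (p, j) = (\<Sum>l<r. \<beta> l p * \<alpha> l j))"
proof -
  interpret vec_space "TYPE(complex)" n .
  let ?P = "\<lambda>T. T \<subseteq> set (cols Y) \<and> lin_indpt T"
  obtain S where S: "maximal S ?P"
    using maximal_exists[of ?P "card (set (cols Y))" "{}"]
    by (meson List.finite_set card_mono empty_iff empty_subsetI finite_lin_indpt2 rev_finite_subset)
  have Ssub: "S \<subseteq> set (cols Y)" and Sli: "lin_indpt S" using S unfolding maximal_def by auto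
  have colsC: "set (cols Y) \<subseteq> carrier_vec n" using Y cols_dim by blast
  have SC: "S \<subseteq> carrier_vec n" using Ssub colsC by blast
  have finS: "finite S" using Ssub finite_subset by blast
  have rkS: "rank Y = card S" using rank_card_indpt[OF Y S] .
  have inspan: "c \<in> span S" if c: "c \<in> set (cols Y)" for c
  proof (cases "c \<in> S")
    case True then show ?thesis using span_mem[OF SC] by blast
  next
    case False
    show ?thesis
    proof (rule ccontr)
      assume ns: "c \<notin> span S"
      have cC: "c \<in> carrier_vec n" using c colsC by blast
      have "lin_indpt (S \<union> {c})" using lin_dep_iff_in_span[OF SC Sli cC False] ns by blast
      then have "?P (S \<union> {c})" using Ssub c by blast
      then have "S \<union> {c} = S" using S unfolding maximal_def by blast
      then show False using False by blast
    qed
  qed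
  have "\<forall>j<m. \<exists>a. lincomb a S = col Y j"
  proof (intro allI impI)
    fix j assume j: "j < m"
    have "col Y j \<in> set (cols Y)" using j Y by (simp add: cols_def)
    then show "\<exists>a. lincomb a S = col Y j" using finite_in_span[OF finS _ inspan] SC by blast
  qed
  then obtain a where a: "\<forall>j<m. lincomb (a j) S = col Y j" by metis
  obtain bs where bs: "distinct bs" "set bs = S" using finite_distinct_list[OF finS] by blast
  define r where "r = length bs"
  have r: "r = card S" unfolding r_def using bs distinct_card by metis
  have rep: "Y $$ (p, j) = (\<Sum>l<r. (bs ! l) $ p * a j (bs ! l))" if p: "p < n" and j: "j < m" for p j
  proof -
    have "Y $$ (p, j) = col Y j $ p" using p j Y by simp
    also have "\<dots> = lincomb (a j) S $ p" using a j by simp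
    also have "\<dots> = (\<Sum>x\<in>S. a j x * x $ p)" by (rule lincomb_index[OF p SC])
    also have "\<dots> = (\<Sum>l<r. a j (bs ! l) * (bs ! l) $ p)"
    proof -
      have "bij_betw ((!) bs) {..<r} S"
        unfolding r_def bs(2)[symmetric] using bs(1)
        by (auto simp: bij_betw_def inj_on_nth set_conv_nth)
      then show ?thesis by (simp add: sum.reindex_bij_betw[symmetric])
    qed
    finally show ?thesis by (simp add: mult.commute)
  qed
  show ?thesis
    using rep rkS rk r by (intro exI[of _ r] exI[of _ "\<lambda>l p. (bs ! l) $ p"] exI[of _ "\<lambda>l j. a j (bs ! l)"]) auto
qed

lemma rank_sum_outer:
  fixes Z :: "complex mat"
  shows "Z \<in> carrier_mat n m \<Longrightarrow> (\<forall>p<n. \<forall>j<m. Z $$ (p, j) = (\<Sum>t<s. f t p * g t j)) \<Longrightarrow> vec_space.rank n Z \<le> s"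
proof (induction s arbitrary: Z)
  case 0
  then have "Z = 0\<^sub>m n m" by (intro eq_matI) auto
  then show ?case using vec_space.rank_0I by simp
next
  case (Suc s)
  define Z1 where "Z1 = mat n m (\<lambda>(p, j). \<Sum>t<s. f t p * g t j)"
  define Z2 where "Z2 = mat n m (\<lambda>(p, j). f s p * g s j)"
  have Z1: "Z1 \<in> carrier_mat n m" and Z2: "Z2 \<in> carrier_mat n m" unfolding Z1_def Z2_def by auto
  have eq: "Z = Z1 + Z2" using Suc.prems unfolding Z1_def Z2_def by (intro eq_matI) auto
  have r1: "vec_space.rank n Z1 \<le> s" using Suc.IH[OF Z1] unfolding Z1_def by simp
  have r2: "vec_space.rank n Z2 \<le> 1"
    using vec_space.rank_le_1_product_entries[OF Z2, of "f s" "g s"] unfolding Z2_def by simp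
  show ?case using vec_space.rank_subadditive[OF Z1 Z2] r1 r2 unfolding eq by simp
qed


lemma sum_split_nm: "(\<Sum>i<(n::nat)*m. f i) = (\<Sum>p<n. \<Sum>j<m. f (p*m + j))"
proof (induction n)
  case 0 then show ?case by simp
next
  case (Suc n)
  have "{..<Suc n * m} = {..<n*m} \<union> {n*m..<n*m+m}" by (auto simp: ivl_disj_un)
  moreover have "(\<Sum>i\<in>{n*m..<n*m+m}. f i) = (\<Sum>j<m. f (n*m + j))"
  proof -
    have "{n*m..<n*m+m} = (\<lambda>j. n*m + j) ` {..<m}"
    proof
      show "{n*m..<n*m+m} \<subseteq> (\<lambda>j. n*m + j) ` {..<m}"
      proof
        fix x assume "x \<in> {n*m..<n*m+m}"
        then show "x \<in> (\<lambda>j. n*m + j) ` {..<m}" by (intro image_eqI[of _ _ "x - n*m"]) auto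
      qed
    qed auto
    then show ?thesis by (simp add: sum.reindex)
  qed
  ultimately show ?case using Suc.IH by (simp add: sum.union_disjoint ivl_disj_int)
qed

definition rowsf :: "nat \<Rightarrow> complex vec \<Rightarrow> nat \<Rightarrow> nat \<Rightarrow> complex" where
  "rowsf m x = (\<lambda>p j. x $ (p*m + j))"

lemma ip_rows: "ip {..<n*m} (($) x) (($) y) = (\<Sum>p<n. ip {..<m} (rowsf m x p) (rowsf m y p))"
  unfolding ip_def rowsf_def by (rule sum_split_nm)

lemma mat_vec_index: "P \<in> carrier_mat d d \<Longrightarrow> v \<in> carrier_vec d \<Longrightarrow> i < d \<Longrightarrow>
    (P *\<^sub>v v) $ i = (\<Sum>j<d. P $$ (i, j) * v $ j)"
  by (simp add: scalar_prod_def atLeast0LessThan)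

definition herm :: "nat \<Rightarrow> complex mat \<Rightarrow> bool" where
  "herm d P \<longleftrightarrow> (\<forall>i<d. \<forall>j<d. P $$ (i,j) = cnj (P $$ (j,i)))"

lemma herm_ip:
  assumes P: "P \<in> carrier_mat d d" and H: "herm d P" and a: "a \<in> carrier_vec d" and b: "b \<in> carrier_vec d"
  shows "ip {..<d} (($) (P *\<^sub>v a)) (($) b) = ip {..<d} (($) a) (($) (P *\<^sub>v b))"
proof -
  have Pa: "(P *\<^sub>v a) $ i = (\<Sum>j<d. P $$ (i, j) * a $ j)" if "i < d" for i
    using mat_vec_index[OF P a that] .
  have Pb: "(P *\<^sub>v b) $ i = (\<Sum>j<d. P $$ (i, j) * b $ j)" if "i < d" for i
    using mat_vec_index[OF P b that] .
  have "ip {..<d} (($) (P *\<^sub>v a)) (($) b) = (\<Sum>i<d. cnj (\<Sum>j<d. P $$ (i, j) * a $ j) * b $ i)"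
    unfolding ip_def by (rule sum.cong[OF refl]) (simp only: Pa lessThan_iff)
  also have "\<dots> = (\<Sum>i<d. \<Sum>j<d. cnj (P $$ (i,j)) * cnj (a $ j) * b $ i)"
    by (simp only: cnj_sum complex_cnj_mult sum_distrib_right)
  also have "\<dots> = (\<Sum>i<d. \<Sum>j<d. P $$ (j,i) * cnj (a $ j) * b $ i)"
  proof (rule sum.cong[OF refl], rule sum.cong[OF refl])
    fix i j assume "i \<in> {..<d}" "j \<in> {..<d}"
    then have "P $$ (i,j) = cnj (P $$ (j,i))" using H unfolding herm_def by blast
    then show "cnj (P $$ (i,j)) * cnj (a $ j) * b $ i = P $$ (j,i) * cnj (a $ j) * b $ i" by simp
  qed
  also have "\<dots> = (\<Sum>j<d. \<Sum>i<d. cnj (a $ j) * (P $$ (j,i) * b $ i))"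
    by (subst sum.swap) (simp only: mult.commute mult.left_commute)
  also have "\<dots> = (\<Sum>j<d. cnj (a $ j) * (\<Sum>i<d. P $$ (j,i) * b $ i))"
    by (simp only: sum_distrib_left)
  also have "\<dots> = ip {..<d} (($) a) (($) (P *\<^sub>v b))"
    unfolding ip_def by (rule sum.cong[OF refl]) (simp only: Pb lessThan_iff)
  finally show ?thesis .
qed

lemma idem_mv:
  assumes P: "P \<in> carrier_mat d d" and I: "P * P = P" and v: "v \<in> carrier_vec d"
  shows "P *\<^sub>v (P *\<^sub>v v) = P *\<^sub>v v"
  using assoc_mult_mat_vec[OF P P v] I by simp

lemma proj_ip:
  assumes P: "P \<in> carrier_mat d d" and H: "herm d P" and I: "P * P = P"
    and a: "a \<in> carrier_vec d" and b: "b \<in> carrier_vec d"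
  shows "ip {..<d} (($) (P *\<^sub>v a)) (($) (P *\<^sub>v b)) = ip {..<d} (($) a) (($) (P *\<^sub>v b))"
  using herm_ip[OF P H a, of "P *\<^sub>v b"] idem_mv[OF P I b] P b by simp

definition qf :: "nat \<Rightarrow> complex mat \<Rightarrow> complex vec \<Rightarrow> real" where
  "qf d P v = Re (ip {..<d} (($) (P *\<^sub>v v)) (($) (P *\<^sub>v v)))"

lemma braket_ip: "dim_vec w = d \<Longrightarrow> braket w X v = ip {..<d} (($) w) (($) (X *\<^sub>v v))"
  unfolding braket_def ip_def by simp

lemma unit_ip: "unit_vec_c d v \<Longrightarrow> Re (ip {..<d} (($) v) (($) v)) = 1"
  unfolding unit_vec_c_def ip_self_Re by simp

lemma braket_bound:
  assumes P: "P \<in> carrier_mat d d" and H: "herm d P" and I: "P * P = P"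
    and v: "v \<in> carrier_vec d" and w: "w \<in> carrier_vec d"
  shows "(cmod (braket w P v))\<^sup>2 \<le> qf d P w * qf d P v"
proof -
  have dw: "dim_vec w = d" using w by simp
  have e: "braket w P v = ip {..<d} (($) (P *\<^sub>v w)) (($) (P *\<^sub>v v))"
    unfolding braket_ip[OF dw] proj_ip[OF P H I w v] ..
  have "(cmod (ip {..<d} (($) (P *\<^sub>v w)) (($) (P *\<^sub>v v))))\<^sup>2 \<le> qf d P w * qf d P v"
    unfolding qf_def by (rule cauchy_schwarz) simp
  then show ?thesis unfolding e .
qed

lemma qf_nonneg: "qf d P v \<ge> 0"
  unfolding qf_def by (rule ip_self_ge0)

lemma sq_le_self: "(x::real) \<ge> 0 \<Longrightarrow> x\<^sup>2 \<le> x \<Longrightarrow> x \<le> 1"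
proof (rule ccontr)
  assume "x \<ge> 0" "x\<^sup>2 \<le> x" "\<not> x \<le> 1"
  then have "x * 1 < x * x" by (intro mult_strict_left_mono) auto
  then show False using \<open>x\<^sup>2 \<le> x\<close> by (simp add: power2_eq_square)
qed

lemma qf_le1:
  assumes P: "P \<in> carrier_mat d d" and H: "herm d P" and I: "P * P = P" and v: "unit_vec_c d v"
  shows "qf d P v \<le> 1"
proof -
  have vc: "v \<in> carrier_vec d" using v unfolding unit_vec_c_def by simp
  have e: "ip {..<d} (($) (P *\<^sub>v v)) (($) (P *\<^sub>v v)) = ip {..<d} (($) v) (($) (P *\<^sub>v v))"
    by (rule proj_ip[OF P H I vc vc])
  have "qf d P v = Re (ip {..<d} (($) v) (($) (P *\<^sub>v v)))" unfolding qf_def e ..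
  also have "\<dots> \<le> cmod (ip {..<d} (($) v) (($) (P *\<^sub>v v)))" by (rule complex_Re_le_cmod)
  finally have q1: "qf d P v \<le> cmod (ip {..<d} (($) v) (($) (P *\<^sub>v v)))" .
  have "(qf d P v)\<^sup>2 \<le> (cmod (ip {..<d} (($) v) (($) (P *\<^sub>v v))))\<^sup>2"
    using q1 qf_nonneg[of d P v] by (rule power_mono)
  also have "\<dots> \<le> Re (ip {..<d} (($) v) (($) v)) * qf d P v" unfolding qf_def
    by (rule cauchy_schwarz) simp
  also have "Re (ip {..<d} (($) v) (($) v)) = 1" by (rule unit_ip[OF v])
  finally have "(qf d P v)\<^sup>2 \<le> qf d P v" by simp
  then show ?thesis using qf_nonneg[of d P v] sq_le_self by blast
qed

lemma braket_self:
  assumes P: "P \<in> carrier_mat d d" and H: "herm d P" and I: "P * P = P" and v: "v \<in> carrier_vec d"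
  shows "cmod (braket v P v) = qf d P v"
proof -
  have dv: "dim_vec v = d" using v by simp
  have e: "braket v P v = ip {..<d} (($) (P *\<^sub>v v)) (($) (P *\<^sub>v v))"
    unfolding braket_ip[OF dv] proj_ip[OF P H I v v] ..
  also have "\<dots> = complex_of_real (qf d P v)" unfolding qf_def by (rule ip_self_real)
  finally show ?thesis using qf_nonneg[of d P v] by simp
qed


lemma unit_of_ip: "x \<in> carrier_vec d \<Longrightarrow> Re (ip {..<d} (($) x) (($) x)) = 1 \<Longrightarrow> unit_vec_c d x"
  unfolding unit_vec_c_def ip_self_Re by simp

lemma nv_unit:
  assumes u: "u \<in> carrier_vec d" and pos: "Re (ip {..<d} (($) u) (($) u)) > 0"
  shows "unit_vec_c d (complex_of_real (1 / sqrt (Re (ip {..<d} (($) u) (($) u)))) \<cdot>\<^sub>v u)"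
    (is "unit_vec_c d ?x")
proof (rule unit_of_ip)
  show "?x \<in> carrier_vec d" using u by simp
  have "ip {..<d} (($) ?x) (($) ?x) = ip {..<d} (normz {..<d} (($) u)) (normz {..<d} (($) u))"
    using u by (intro ip_cong) (auto simp: normz_def)
  also have "\<dots> = 1" by (rule normz_unit[OF pos])
  finally show "Re (ip {..<d} (($) ?x) (($) ?x)) = 1" by simp
qed

lemma range_vec:
  assumes P: "P \<in> carrier_mat d d" and H: "herm d P" and I: "P * P = P"
    and P0: "P \<noteq> 0\<^sub>m d d" and y: "unit_vec_c d y"
  shows "\<exists>x. unit_vec_c d x \<and> P *\<^sub>v x = x \<and> (cmod (ip {..<d} (($) x) (($) y)))\<^sup>2 \<ge> qf d P y"
proof -
  have yc: "y \<in> carrier_vec d" using y unfolding unit_vec_c_def by simp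
  show ?thesis
  proof (cases "qf d P y > 0")
    case True
    define q where "q = qf d P y"
    define u where "u = P *\<^sub>v y"
    have uc: "u \<in> carrier_vec d" unfolding u_def using P yc by simp
    have uq: "Re (ip {..<d} (($) u) (($) u)) = q" unfolding u_def q_def qf_def ..
    define x where "x = complex_of_real (1 / sqrt q) \<cdot>\<^sub>v u"
    have ux: "unit_vec_c d x" unfolding x_def using nv_unit[OF uc] True uq unfolding q_def by simp
    have Px: "P *\<^sub>v x = x" unfolding x_def u_def
      using mult_mat_vec[OF P, of "P *\<^sub>v y"] idem_mv[OF P I yc] P yc by simp
    have "ip {..<d} (($) u) (($) y) = ip {..<d} (($) y) (($) u)" unfolding u_def by (rule herm_ip[OF P H yc yc])
    also have "\<dots> = ip {..<d} (($) u) (($) u)" unfolding u_def by (rule proj_ip[OF P H I yc yc, symmetric])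
    also have "\<dots> = complex_of_real q" using uq ip_self_real by metis
    finally have uy: "ip {..<d} (($) u) (($) y) = complex_of_real q" .
    have "ip {..<d} (($) x) (($) y) = ip {..<d} (\<lambda>i. complex_of_real (1 / sqrt q) * u $ i) (($) y)"
      unfolding x_def using uc by (intro ip_cong) auto
    also have "\<dots> = complex_of_real (1 / sqrt q) * complex_of_real q"
      unfolding ip_scale_left uy by simp
    finally have e: "ip {..<d} (($) x) (($) y) = complex_of_real (q / sqrt q)" by simp
    have "cmod (ip {..<d} (($) x) (($) y)) = q / sqrt q" unfolding e norm_of_real
      using True unfolding q_def[symmetric] by simp
    moreover have "(q / sqrt q)\<^sup>2 = q" using True unfolding q_def[symmetric]
      by (simp add: power_divide power2_eq_square)
    ultimately have "(cmod (ip {..<d} (($) x) (($) y)))\<^sup>2 = q" by simp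
    then show ?thesis using ux Px unfolding q_def by (intro exI[of _ x]) simp
  next
    case False
    then have q0: "qf d P y = 0" using qf_nonneg[of d P y] by simp
    obtain i j where ij: "i < d" "j < d" "P $$ (i, j) \<noteq> 0"
    proof (rule ccontr)
      assume "\<not> thesis"
      then have "\<forall>i<d. \<forall>j<d. P $$ (i, j) = 0" using that by blast
      then have "P = 0\<^sub>m d d" using P by (intro eq_matI) auto
      then show False using P0 by simp
    qed
    define u where "u = P *\<^sub>v unit_vec d j"
    have uc: "u \<in> carrier_vec d" unfolding u_def using P by simp
    have ui: "u $ i = P $$ (i, j)" unfolding u_def using P ij
      by (simp add: mat_vec_index[OF P] if_distrib[of "\<lambda>x. _ * x"] cong: if_cong)
    have upos: "Re (ip {..<d} (($) u) (($) u)) > 0"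
    proof -
      have "Re (ip {..<d} (($) u) (($) u)) \<noteq> 0" using ip_zero_iff[of "{..<d}" "($) u"] ui ij by auto
      then show ?thesis using ip_self_ge0[of "{..<d}" "($) u"] by linarith
    qed
    define x where "x = complex_of_real (1 / sqrt (Re (ip {..<d} (($) u) (($) u)))) \<cdot>\<^sub>v u"
    have ux: "unit_vec_c d x" unfolding x_def using nv_unit[OF uc upos] .
    have Px: "P *\<^sub>v x = x" unfolding x_def u_def
      using mult_mat_vec[OF P, of "P *\<^sub>v unit_vec d j"] idem_mv[OF P I, of "unit_vec d j"] P by simp
    show ?thesis using ux Px q0 by (intro exI[of _ x]) simp
  qed
qed


lemma idx_lt: "j < (m::nat) \<Longrightarrow> p < n \<Longrightarrow> p * m + j < n * m"
proof -
  assume "j < m" "p < n"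
  then have "p * m + j < Suc p * m" by simp
  also have "\<dots> \<le> n * m" using \<open>p < n\<close> by (intro mult_le_mono1) simp
  finally show ?thesis .
qed

lemma cnj_mult_self: "cnj z * z = complex_of_real ((cmod z)\<^sup>2)"
  by (metis complex_norm_square mult.commute)

lemma build_z:
  assumes o: "orthon {..<m} s w" and sk: "s \<le> k" and xc: "x \<in> carrier_vec (n*m)"
    and Mpos: "mass n {..<m} s w (rowsf m x) > 0"
  shows "\<exists>z. unit_vec_c (n*m) z \<and> schmidt_rank n m z \<le> k \<and>
     ip {..<n*m} (($) x) (($) z) = complex_of_real (sqrt (mass n {..<m} s w (rowsf m x)))"
proof -
  define M where "M = mass n {..<m} s w (rowsf m x)"
  define X where "X = rowsf m x"
  define c where "c t p = ip {..<m} (w t) (X p)" for t p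
  define y where "y t p = complex_of_real (1 / sqrt M) * c t p" for t p
  define Zs where "Zs p j = (\<Sum>t<s. y t p * w t j)" for p j
  define z where "z = vec (n*m) (\<lambda>i. Zs (i div m) (i mod m))"
  have Mp: "M > 0" using Mpos unfolding M_def .
  have zc: "z \<in> carrier_vec (n*m)" unfolding z_def by simp
  have rz: "rowsf m z p j = Zs p j" if "p < n" "j < m" for p j
    unfolding rowsf_def z_def using idx_lt[OF that(2,1)] that by simp
  have Mc: "M = (\<Sum>p<n. \<Sum>t<s. (cmod (c t p))\<^sup>2)" unfolding M_def mass_def c_def X_def ..
  have ipx: "ip {..<n*m} (($) x) (($) z) = complex_of_real (sqrt M)"
  proof -
    have "ip {..<n*m} (($) x) (($) z) = (\<Sum>p<n. ip {..<m} (X p) (rowsf m z p))"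
      unfolding X_def by (rule ip_rows)
    also have "\<dots> = (\<Sum>p<n. ip {..<m} (X p) (\<lambda>j. \<Sum>t<s. y t p * w t j))"
      using rz unfolding Zs_def by (intro sum.cong refl ip_cong) auto
    also have "\<dots> = (\<Sum>p<n. \<Sum>t<s. y t p * cnj (c t p))"
      unfolding ip_lin_right c_def by (simp add: ip_cnj)
    also have "\<dots> = (\<Sum>p<n. \<Sum>t<s. complex_of_real (1 / sqrt M) * complex_of_real ((cmod (c t p))\<^sup>2))"
      unfolding y_def complex_norm_square by (intro sum.cong refl) (simp only: mult.assoc)
    also have "\<dots> = complex_of_real (1 / sqrt M * M)"
      unfolding Mc by (simp add: sum_distrib_left)
    also have "1 / sqrt M * M = sqrt M" using Mp real_div_sqrt[of M] by simp
    finally show ?thesis .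
  qed
  have unit: "unit_vec_c (n*m) z"
  proof (rule unit_of_ip[OF zc])
    have "ip {..<n*m} (($) z) (($) z) = (\<Sum>p<n. ip {..<m} (rowsf m z p) (rowsf m z p))"
      by (rule ip_rows)
    also have "\<dots> = (\<Sum>p<n. ip {..<m} (\<lambda>j. \<Sum>t<s. y t p * w t j) (\<lambda>j. \<Sum>t<s. y t p * w t j))"
      using rz unfolding Zs_def by (intro sum.cong refl ip_cong) auto
    also have "\<dots> = (\<Sum>p<n. \<Sum>t<s. cnj (y t p) * y t p)"
      by (intro sum.cong refl ip_orthon_expand[OF o])
    also have "\<dots> = (\<Sum>p<n. \<Sum>t<s. complex_of_real ((cmod (c t p))\<^sup>2 / M))"
    proof (intro sum.cong refl)
      fix p t
      have "cnj (y t p) * y t p = complex_of_real ((cmod (y t p))\<^sup>2)" by (rule cnj_mult_self)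
      also have "(cmod (y t p))\<^sup>2 = (cmod (c t p))\<^sup>2 / M" unfolding y_def using Mp
        by (simp add: norm_divide power_divide)
      finally show "cnj (y t p) * y t p = complex_of_real ((cmod (c t p))\<^sup>2 / M)" .
    qed
    also have "\<dots> = complex_of_real ((\<Sum>p<n. \<Sum>t<s. (cmod (c t p))\<^sup>2) / M)"
      by (simp only: of_real_sum sum_divide_distrib)
    also have "\<dots> = 1" using Mp Mc[symmetric] by simp
    finally show "Re (ip {..<n*m} (($) z) (($) z)) = 1" by simp
  qed
  have rk: "schmidt_rank n m z \<le> s"
    unfolding schmidt_rank_def
  proof (rule rank_sum_outer)
    show "coeff_mat n m z \<in> carrier_mat n m" unfolding coeff_mat_def by simp
    show "\<forall>p<n. \<forall>j<m. coeff_mat n m z $$ (p, j) = (\<Sum>t<s. y t p * w t j)"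
      using rz unfolding coeff_mat_def rowsf_def Zs_def by simp
  qed
  show ?thesis using unit rk sk ipx unfolding M_def by (intro exI[of _ z]) auto
qed


definition Sset :: "nat \<Rightarrow> nat \<Rightarrow> nat \<Rightarrow> complex mat \<Rightarrow> real set" where
  "Sset n m k X = {cmod (braket w X v) | v w.
      unit_vec_c (n*m) v \<and> unit_vec_c (n*m) w \<and>
      schmidt_rank n m v \<le> k \<and> schmidt_rank n m w \<le> k}"

lemma S_norm_Sset: "S_norm n m k X = Sup (Sset n m k X)"
  unfolding S_norm_def Sset_def ..

lemma Sset_bdd:
  assumes P: "P \<in> carrier_mat (n*m) (n*m)" and H: "herm (n*m) P" and I: "P * P = P"
  shows "bdd_above (Sset n m k P)"
proof (rule bdd_aboveI[of _ 1])
  fix c assume "c \<in> Sset n m k P"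
  then have "\<exists>v w. c = cmod (braket w P v) \<and> unit_vec_c (n*m) v \<and> unit_vec_c (n*m) w \<and>
      schmidt_rank n m v \<le> k \<and> schmidt_rank n m w \<le> k" unfolding Sset_def by simp
  then obtain v w where c: "c = cmod (braket w P v)" and v: "unit_vec_c (n*m) v" and w: "unit_vec_c (n*m) w"
    by blast
  have vc: "v \<in> carrier_vec (n*m)" and wc: "w \<in> carrier_vec (n*m)" using v w unfolding unit_vec_c_def by auto
  have "c\<^sup>2 \<le> qf (n*m) P w * qf (n*m) P v" unfolding c by (rule braket_bound[OF P H I vc wc])
  also have "\<dots> \<le> 1 * 1"
    using qf_le1[OF P H I v] qf_le1[OF P H I w] qf_nonneg[of "n*m" P v] qf_nonneg[of "n*m" P w]
    by (intro mult_mono) auto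
  finally have "c\<^sup>2 \<le> 1\<^sup>2" by simp
  then show "c \<le> 1" by (rule power2_le_imp_le) simp
qed

lemma Sset_le:
  assumes P: "P \<in> carrier_mat (n*m) (n*m)" and H: "herm (n*m) P" and I: "P * P = P"
    and c: "c \<in> Sset n m k P"
  shows "c \<le> S_norm n m k P"
  unfolding S_norm_Sset using cSup_upper[OF c Sset_bdd[OF P H I]] .

lemma diag_in_Sset:
  "unit_vec_c (n*m) z \<Longrightarrow> schmidt_rank n m z \<le> k \<Longrightarrow> cmod (braket z P z) \<in> Sset n m k P"
  unfolding Sset_def by (rule CollectI, rule exI[of _ z], rule exI[of _ z]) simp

lemma elem_bound:
  assumes m: "2 \<le> m" and hk: "1 \<le> h" "h \<le> k" "k \<le> m"
    and P: "P \<in> carrier_mat (n*m) (n*m)" and H: "herm (n*m) P" and I: "P * P = P"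
    and P0: "P \<noteq> 0\<^sub>m (n*m) (n*m)"
    and v: "unit_vec_c (n*m) v" and w: "unit_vec_c (n*m) w"
    and rv: "schmidt_rank n m v \<le> h" and rw: "schmidt_rank n m w \<le> h"
  shows "(1 - real (k - h) / real (m - 1)) * cmod (braket w P v) + real (k - h) / real (m - 1) \<le> S_norm n m k P"
proof -
  define d where "d = n * m"
  define t where "t = real (k - h) / real (m - 1)"
  define c0 where "c0 = cmod (braket w P v)"
  have vc: "v \<in> carrier_vec d" and wc: "w \<in> carrier_vec d" using v w unfolding unit_vec_c_def d_def by auto
  have mpos: "real (m - 1) > 0" using m by simp
  have "real (k - h) \<le> real (m - 1)" using hk by simp
  then have t1: "t \<le> 1" unfolding t_def using mpos by (simp add: divide_le_eq_1)
  have t0: "t \<ge> 0" unfolding t_def by simp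
  obtain y where y: "unit_vec_c d y" and ry: "schmidt_rank n m y \<le> h" and c0y: "c0 \<le> qf d P y"
  proof -
    have b: "c0\<^sup>2 \<le> qf d P w * qf d P v" unfolding c0_def d_def
      by (rule braket_bound[OF P H I vc[unfolded d_def] wc[unfolded d_def]])
    show ?thesis
    proof (cases "qf d P w \<ge> qf d P v")
      case True
      have "qf d P w * qf d P v \<le> qf d P w * qf d P w"
        using True qf_nonneg[of d P w] by (intro mult_left_mono) auto
      then have "c0\<^sup>2 \<le> (qf d P w)\<^sup>2" using b by (simp add: power2_eq_square)
      then have "c0 \<le> qf d P w" by (rule power2_le_imp_le) (rule qf_nonneg)
      then show ?thesis using that w rw unfolding d_def by blast
    next
      case False
      have "qf d P w * qf d P v \<le> qf d P v * qf d P v"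
        using False qf_nonneg[of d P v] by (intro mult_right_mono) auto
      then have "c0\<^sup>2 \<le> (qf d P v)\<^sup>2" using b by (simp add: power2_eq_square)
      then have "c0 \<le> qf d P v" by (rule power2_le_imp_le) (rule qf_nonneg)
      then show ?thesis using that v rv unfolding d_def by blast
    qed
  qed
  have yc: "y \<in> carrier_vec d" using y unfolding unit_vec_c_def by simp
  obtain x where x: "unit_vec_c d x" and Px: "P *\<^sub>v x = x"
    and xy: "(cmod (ip {..<d} (($) x) (($) y)))\<^sup>2 \<ge> qf d P y"
    using range_vec[OF P[folded d_def] H[folded d_def] I P0[folded d_def] y] by blast
  have xc: "x \<in> carrier_vec d" using x unfolding unit_vec_c_def by simp
  have cm: "coeff_mat n m y \<in> carrier_mat n m" unfolding coeff_mat_def by simp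
  have ry': "vec_space.rank n (coeff_mat n m y) \<le> h" using ry unfolding schmidt_rank_def .
  obtain r \<beta> \<alpha> where r: "r \<le> h" and rep: "\<forall>p<n. \<forall>j<m. coeff_mat n m y $$ (p, j) = (\<Sum>l<r. \<beta> l p * \<alpha> l j)"
    using rank_rep[OF cm ry'] by blast
  have repY: "\<forall>p<n. \<forall>j<m. rowsf m y p j = (\<Sum>l<r. \<beta> l p * \<alpha> l j)"
    using rep unfolding coeff_mat_def rowsf_def by simp
  have nrm: "(\<Sum>p<n. Re (ip {..<m} (rowsf m u p) (rowsf m u p))) = 1" if "unit_vec_c d u" for u
  proof -
    have "Re (ip {..<n*m} (($) u) (($) u)) = 1" using unit_ip[OF that] unfolding d_def .
    then show ?thesis unfolding ip_rows by (simp add: Re_sum)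
  qed
  define a where "a = (cmod (ip {..<d} (($) x) (($) y)))\<^sup>2"
  have a_eq: "a = (cmod (\<Sum>p<n. ip {..<m} (rowsf m x p) (rowsf m y p)))\<^sup>2"
    unfolding a_def d_def ip_rows ..
  obtain s w' where s: "s \<le> k" and o: "orthon {..<m} s w'"
    and ms: "mass n {..<m} s w' (rowsf m x) \<ge> a + t * (1 - a)"
    using core[OF m hk nrm[OF x] nrm[OF y] repY r] unfolding a_eq[symmetric] t_def by blast
  define M where "M = mass n {..<m} s w' (rowsf m x)"
  have ac0: "c0 \<le> a" using c0y xy unfolding a_def by simp
  have target: "(1 - t) * c0 + t \<le> M"
  proof -
    have "(1 - t) * c0 \<le> (1 - t) * a" using ac0 t1 by (intro mult_left_mono) auto
    then show ?thesis using ms unfolding M_def by (simp add: algebra_simps)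
  qed
  have vv: "cmod (braket v P v) \<in> Sset n m k P" using diag_in_Sset[OF v] rv hk by simp
  have "0 \<le> cmod (braket v P v)" by simp
  then have S0: "0 \<le> S_norm n m k P" using Sset_le[OF P H I vv] by linarith
  show ?thesis
  proof (cases "M > 0")
    case False
    then show ?thesis using target S0 unfolding t_def c0_def by simp
  next
    case True
    obtain z where z: "unit_vec_c (n*m) z" and rz: "schmidt_rank n m z \<le> k"
      and xz: "ip {..<n*m} (($) x) (($) z) = complex_of_real (sqrt M)"
      using build_z[OF o s xc[unfolded d_def]] True unfolding M_def by blast
    have zc: "z \<in> carrier_vec d" using z unfolding unit_vec_c_def d_def by simp
    have "ip {..<d} (($) x) (($) (P *\<^sub>v z)) = ip {..<d} (($) (P *\<^sub>v x)) (($) z)"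
      by (rule herm_ip[OF P[folded d_def] H[folded d_def] xc zc, symmetric])
    also have "\<dots> = complex_of_real (sqrt M)" unfolding Px using xz unfolding d_def .
    finally have e: "ip {..<d} (($) x) (($) (P *\<^sub>v z)) = complex_of_real (sqrt M)" .
    have "(cmod (ip {..<d} (($) x) (($) (P *\<^sub>v z))))\<^sup>2 \<le> Re (ip {..<d} (($) x) (($) x)) * qf d P z"
      unfolding qf_def by (rule cauchy_schwarz) simp
    then have "M \<le> qf d P z" unfolding e using unit_ip[OF x] True by simp
    also have "qf d P z = cmod (braket z P z)"
      using braket_self[OF P[folded d_def] H[folded d_def] I zc] by simp
    also have "\<dots> \<le> S_norm n m k P" using Sset_le[OF P H I diag_in_Sset[OF z rz]] .
    finally show ?thesis using target unfolding t_def c0_def by simp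
  qed
qed


theorem corollary4p16:
  fixes n m h k :: nat and P :: "complex mat"
  assumes "2 \<le> m" "m \<le> n" "1 \<le> h" "h \<le> k" "k \<le> m"
    and "orth_projection (n*m) P" and "P \<noteq> 0\<^sub>m (n*m) (n*m)"
  shows "S_norm n m k P \<ge>
    (1 - real (k - h) / real (m - 1)) * S_norm n m h P + real (k - h) / real (m - 1)"
proof -
  note m = assms(1) and hk = assms(3,4,5)
  have op: "P \<in> carrier_mat (n*m) (n*m) \<and> P * P = P \<and> herm (n*m) P"
    using assms(6) unfolding orth_projection_def herm_def .
  have P: "P \<in> carrier_mat (n*m) (n*m)" and I: "P * P = P" and H: "herm (n*m) P"
    using op by blast+
  note P0 = assms(7)
  define t where "t = real (k - h) / real (m - 1)"
  have mpos: "real (m - 1) > 0" using m by simp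
  have "real (k - h) \<le> real (m - 1)" using hk by simp
  then have t1: "t \<le> 1" unfolding t_def using mpos by (simp add: divide_le_eq_1)
  have bound: "(1 - t) * c + t \<le> S_norm n m k P" if c: "c \<in> Sset n m h P" for c
  proof -
    have "\<exists>v w. c = cmod (braket w P v) \<and> unit_vec_c (n*m) v \<and> unit_vec_c (n*m) w \<and>
      schmidt_rank n m v \<le> h \<and> schmidt_rank n m w \<le> h" using c unfolding Sset_def by simp
    then obtain v w where cv: "c = cmod (braket w P v)" and v: "unit_vec_c (n*m) v" and w: "unit_vec_c (n*m) w"
      and rv: "schmidt_rank n m v \<le> h" and rw: "schmidt_rank n m w \<le> h" by blast
    show ?thesis using elem_bound[OF m hk P H I P0 v w rv rw] unfolding t_def cv .
  qed
  define d where "d = n * m"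
  have dpos: "0 < d" unfolding d_def using assms(1,2) by simp
  define e where "e = (unit_vec d 0 :: complex vec)"
  have ue: "unit_vec_c (n*m) e"
  proof -
    have "(\<Sum>i<d. (cmod (e $ i))\<^sup>2) = (\<Sum>i<d. if i = 0 then 1 else 0)"
      unfolding e_def using dpos by (intro sum.cong refl) auto
    also have "\<dots> = 1" using dpos by simp
    finally show ?thesis unfolding unit_vec_c_def e_def d_def[symmetric] using dpos by simp
  qed
  have re: "schmidt_rank n m e \<le> h"
  proof -
    have "schmidt_rank n m e \<le> 1" unfolding schmidt_rank_def
    proof (rule rank_sum_outer)
      show "coeff_mat n m e \<in> carrier_mat n m" unfolding coeff_mat_def by simp
      show "\<forall>p<n. \<forall>j<m. coeff_mat n m e $$ (p, j) =
          (\<Sum>t<(1::nat). (\<lambda>t p. if p = 0 then 1 else 0) t p * (\<lambda>t j. if j = 0 then 1 else 0) t j)"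
      proof (intro allI impI)
        fix p j assume pj: "p < n" "j < m"
        have lt: "p * m + j < d" unfolding d_def by (rule idx_lt[OF pj(2,1)])
        have "p * m + j = 0 \<longleftrightarrow> p = 0 \<and> j = 0" using pj m by (cases p) auto
        then show "coeff_mat n m e $$ (p, j) =
          (\<Sum>t<(1::nat). (\<lambda>t p. if p = 0 then 1 else 0) t p * (\<lambda>t j. if j = 0 then 1 else 0) t j)"
          unfolding coeff_mat_def e_def using pj lt dpos by (auto simp: card_lessThan)
      qed
    qed
    then show ?thesis using hk by simp
  qed
  have ne: "cmod (braket e P e) \<in> Sset n m h P" by (rule diag_in_Sset[OF ue re])
  show ?thesis
  proof (cases "t = 1")
    case True
    then show ?thesis using bound[OF ne] unfolding t_def[symmetric] by simp
  next
    case False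
    then have tp: "1 - t > 0" using t1 by simp
    have "\<forall>c\<in>Sset n m h P. c \<le> (S_norm n m k P - t) / (1 - t)"
    proof
      fix c assume "c \<in> Sset n m h P"
      then have "(1 - t) * c \<le> S_norm n m k P - t" using bound by fastforce
      then show "c \<le> (S_norm n m k P - t) / (1 - t)" using tp by (simp add: pos_le_divide_eq mult.commute)
    qed
    then have "Sup (Sset n m h P) \<le> (S_norm n m k P - t) / (1 - t)"
      using ne by (intro cSup_least) auto
    then have "S_norm n m h P \<le> (S_norm n m k P - t) / (1 - t)" unfolding S_norm_Sset .
    then have "(1 - t) * S_norm n m h P \<le> S_norm n m k P - t" using tp by (simp add: pos_le_divide_eq mult.commute)
    then show ?thesis unfolding t_def[symmetric] by simp
  qed
qed

end
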